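(* Let $\gamma>0$ and $\mathbf y^{\mathrm{in}},\mathbf z^{\mathrm{in}}\in\underline{\mathcal Y}(\gamma)$, and let $(\mathbf Y^{(i)})_{i=0}^n$ and $(\mathbf Z^{(i)})_{i=0}^n$ be $\underline{\mathcal Y}_{\mathcal T}(\gamma)$-valued sequences, driven by the same $\mathbf W$, each satisfying the iteration scheme (It), with initial conditions $\mathbf y^{\mathrm{in}}$ and $\mathbf z^{\mathrm{in}}$ respectively. Then almost surely: (a) $\mathbf Y^{(0)}(\cdot)\ge\mathbf Y^{(1)}(\cdot)\ge\cdots\ge\mathbf Y^{(n)}(\cdot)$; (b) if $\mathbf y^{\mathrm{in}}\ge\mathbf z^{\mathrm{in}}$, then $\mathbf Y^{(i)}(\cdot)\ge\mathbf Z^{(i)}(\cdot)$ for $i=0,\dots,n$.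
   Context: Fixed $\beta\ge1$. $\hat{\mathbb Z}=\tfrac12+\mathbb Z$; index intervals use $(i,j)=(j,i)$ if $j<i$; $z_{\mathcal I}:=\sum_{b\in\mathcal I\cap\hat{\mathbb Z}}z_b$; $\mathrm{Av}_{\mathcal I}(\mathbf y)=|\mathcal I\cap\hat{\mathbb Z}|^{-1}\sum_{a\in\mathcal I\cap\hat{\mathbb Z}}y_a$. $\underline{\mathcal Y}(\gamma)=\{\mathbf y\in(0,\infty)^{\hat{\mathbb Z}}:\liminf_{|m|\to\infty}\mathrm{Av}_{(0,m)}(\mathbf y)\ge\gamma\}$; $C_+([0,\infty))=\{y\in C([0,\infty)):y>0\}$; $\underline{\mathcal Y}_{\mathcal T}(\gamma)=\{\mathbf y\in C_+([0,\infty))^{\hat{\mathbb Z}}:\liminf_{|m|\to\infty}\inf_{s\le t}\mathrm{Av}_{(0,m)}(\mathbf y(s))\ge\gamma\ \forall t\}$. $W_a=B_{a+1/2}-B_{a-1/2}$ with independent standard Brownian motions. $\psi_a(y,\mathbf z)=\tfrac12\sum_{i\in\mathbb Z:|i-a|>1}\frac{y}{z_{(a,i)}(y+z_{(a,i)})}$ ($y>0$), $\psi_a(0,\cdot)=0$. Iteration scheme (It) with initial condition $\mathbf y^{\mathrm{in}}$: $Y^{(0)}_a(t)=y^{\mathrm{in}}_a+W_a(t)+\beta\int_0^t\frac{ds}{Y^{(0)}_a(s)}$; for $n\ge1$, $Y^{(n)}_a(t)=y^{\mathrm{in}}_a+W_a(t)+\beta\int_0^t\big(\frac1{Y^{(n)}_a(s)}-\psi_a(Y^{(n)}_a(s),\mathbf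 Y^{(n-1)}(s))\big)ds$, $a\in\hat{\mathbb Z}$. Order: coordinatewise and for all times. *)

theory Defs
  imports "HOL-Probability.Probability"
begin

(* Half-integers \<hat>Z = 1/2 + Z, as a set of reals. Configurations are functions real \<Rightarrow> real,
   of which only the values on \<hat>Z matter. *)
definition hatZ :: "real set" where
  "hatZ = {x. x - 1/2 \<in> \<int>}"

definition oiv :: "real \<Rightarrow> real \<Rightarrow> real set" where
  "oiv i j = {min i j <..< max i j}"

definition zsum :: "real set \<Rightarrow> (real \<Rightarrow> real) \<Rightarrow> real" where
  "zsum I z = (\<Sum>b\<in>I \<inter> hatZ. z b)"

definition Av :: "real set \<Rightarrow> (real \<Rightarrow> real) \<Rightarrow> real" where
  "Av I y = (\<Sum>a\<in>I \<inter> hatZ. y a) / real (card (I \<inter> hatZ))"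

definition Ylow :: "real \<Rightarrow> (real \<Rightarrow> real) set" where
  "Ylow \<gamma> = {y. (\<forall>a\<in>hatZ. 0 < y a) \<and>
     (\<forall>\<epsilon>>0. \<exists>N::int. \<forall>m::int. \<bar>m\<bar> \<ge> N \<longrightarrow> Av (oiv 0 (real_of_int m)) y \<ge> \<gamma> - \<epsilon>)}"

(* underline Y_T(gamma): y a is the trajectory of coordinate a (time \<Rightarrow> value);
   each coordinate in C_+([0,\<infinity>)), and for every t \<ge> 0,
   liminf_{|m|\<rightarrow>\<infinity>} inf_{0\<le>s\<le>t} Av_(0,m)(y(s)) \<ge> gamma *)
definition YlowT :: "real \<Rightarrow> (real \<Rightarrow> real \<Rightarrow> real) set" where
  "YlowT \<gamma> = {y. (\<forall>a\<in>hatZ. continuous_on {0..} (y a) \<and> (\<forall>t\<ge>0. 0 < y a t)) \<and>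
     (\<forall>t\<ge>0. \<forall>\<epsilon>>0. \<exists>N::int. \<forall>m::int. \<bar>m\<bar> \<ge> N \<longrightarrow>
         (INF s\<in>{0..t}. Av (oiv 0 (real_of_int m)) (\<lambda>a. y a s)) \<ge> \<gamma> - \<epsilon>)}"

definition psi :: "real \<Rightarrow> real \<Rightarrow> (real \<Rightarrow> real) \<Rightarrow> real" where
  "psi a y z = (if y = 0 then 0 else
     (1/2) * infsum (\<lambda>i::int. y / (zsum (oiv a (real_of_int i)) z * (y + zsum (oiv a (real_of_int i)) z)))
                    {i::int. \<bar>real_of_int i - a\<bar> > 1})"

definition std_BM :: "'w measure \<Rightarrow> ('w \<Rightarrow> real \<Rightarrow> real) \<Rightarrow> bool" where
  "std_BM M X \<longleftrightarrow>
     (\<forall>t\<ge>0. (\<lambda>\<omega>. X \<omega> t) \<in> borel_measurable M) \<and>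
     (\<forall>\<omega>\<in>space M. X \<omega> 0 = 0 \<and> continuous_on {0..} (X \<omega>)) \<and>
     (\<forall>s t. 0 \<le> s \<and> s < t \<longrightarrow>
        distributed M lborel (\<lambda>\<omega>. X \<omega> t - X \<omega> s) (normal_density 0 (sqrt (t - s)))) \<and>
     (\<forall>ts::real list. sorted_wrt (<) ts \<and> (\<forall>t\<in>set ts. 0 \<le> t) \<longrightarrow>
        prob_space.indep_vars M (\<lambda>_. borel)
          (\<lambda>j \<omega>. X \<omega> (ts ! Suc j) - X \<omega> (ts ! j)) {..<length ts - 1})"

(* independent standard Brownian motions B_k, k \<in> Z (B indexed by reals; only integer indices used) *)
definition indep_BMs :: "'w measure \<Rightarrow> (real \<Rightarrow> 'w \<Rightarrow> real \<Rightarrow> real) \<Rightarrow> bool" where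
  "indep_BMs M B \<longleftrightarrow> (\<forall>k\<in>\<int>. std_BM M (B k)) \<and>
     prob_space.indep_vars M (\<lambda>_. PiM {0..} (\<lambda>_. borel))
       (\<lambda>k \<omega>. restrict (B k \<omega>) {0..}) \<int>"

definition Wdrv :: "(real \<Rightarrow> 'w \<Rightarrow> real \<Rightarrow> real) \<Rightarrow> real \<Rightarrow> 'w \<Rightarrow> real \<Rightarrow> real" where
  "Wdrv B a \<omega> t = B (a + 1/2) \<omega> t - B (a - 1/2) \<omega> t"

(* The iteration scheme (It) for a single path: Y i a t, i = 0..n, driven by the path W a t,
   initial condition yin.  The integrals are required to exist (Henstock-Kurzweil). *)
definition It_scheme :: "real \<Rightarrow> nat \<Rightarrow> (real \<Rightarrow> real) \<Rightarrow> (real \<Rightarrow> real \<Rightarrow> real)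
     \<Rightarrow> (nat \<Rightarrow> real \<Rightarrow> real \<Rightarrow> real) \<Rightarrow> bool" where
  "It_scheme \<beta> n yin W Y \<longleftrightarrow>
     (\<forall>a\<in>hatZ. \<forall>t\<ge>0.
        (\<lambda>s. 1 / Y 0 a s) integrable_on {0..t} \<and>
        Y 0 a t = yin a + W a t + \<beta> * integral {0..t} (\<lambda>s. 1 / Y 0 a s)) \<and>
     (\<forall>i. 1 \<le> i \<and> i \<le> n \<longrightarrow> (\<forall>a\<in>hatZ. \<forall>t\<ge>0.
        (\<lambda>s. 1 / Y i a s - psi a (Y i a s) (\<lambda>b. Y (i - 1) b s)) integrable_on {0..t} \<and>
        Y i a t = yin a + W a t +
          \<beta> * integral {0..t} (\<lambda>s. 1 / Y i a s - psi a (Y i a s) (\<lambda>b. Y (i - 1) b s))))"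

end

theory Submission
  imports Defs
begin


lemma summable_inv_sq_int: "(\<lambda>i::int. 1 / (real_of_int i)^2) summable_on UNIV"
proof -
  have s: "summable (\<lambda>n. inverse (real n ^ 2))" by (rule inverse_power_summable) simp
  have n: "(\<lambda>n::nat. 1 / (real n)^2) summable_on UNIV"
    using s by (subst summable_on_UNIV_nonneg_real_iff) (auto simp: field_simps)
  have 1: "(\<lambda>i::int. 1 / (real_of_int i)^2) summable_on (int ` UNIV)"
    by (subst summable_on_reindex) (auto simp: o_def n)
  have 2: "(\<lambda>i::int. 1 / (real_of_int i)^2) summable_on ((\<lambda>n. - int n) ` UNIV)"
    by (subst summable_on_reindex) (auto simp: o_def n inj_on_def)
  have mem: "i \<in> int ` UNIV \<union> (\<lambda>n. - int n) ` UNIV" for i :: int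
  proof (cases "0 \<le> i")
    case True then have "i = int (nat i)" by simp
    then show ?thesis by blast
  next
    case False then have "i = - int (nat (-i))" by simp
    then show ?thesis by blast
  qed
  have "UNIV = int ` UNIV \<union> (\<lambda>n. - int n) ` UNIV" using mem by blast
  then show ?thesis using summable_on_union[OF 1 2] by simp
qed

lemma cmp_principle:
  fixes D :: "real \<Rightarrow> real"
  assumes cont: "continuous_on {0..} D" and D0: "D 0 \<ge> 0"
    and mono: "\<And>u t. 0 \<le> u \<Longrightarrow> u \<le> t \<Longrightarrow> (\<forall>s\<in>{u..t}. D s \<le> 0) \<Longrightarrow> D u \<le> D t"
    and t: "t \<ge> 0"
  shows "D t \<ge> 0"
proof (rule ccontr)
  assume neg: "\<not> D t \<ge> 0"
  define S where "S = {s\<in>{0..t}. D s \<ge> 0}"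
  have cS: "closed S"
  proof -
    have "continuous_on {0..t} D" using cont by (rule continuous_on_subset) auto
    then have "closed ({0..t} \<inter> D -` {0..})"
      by (rule continuous_closed_preimage) auto
    moreover have "S = {0..t} \<inter> D -` {0..}" by (auto simp: S_def)
    ultimately show ?thesis by simp
  qed
  have ne: "S \<noteq> {}" using D0 t by (auto simp: S_def intro!: exI[of _ 0])
  have bd: "bdd_above S" by (auto simp: S_def bdd_above_def)
  define t0 where "t0 = Sup S"
  have t0S: "t0 \<in> S" unfolding t0_def using cS ne bd closed_contains_Sup by blast
  then have t00: "0 \<le> t0" "t0 \<le> t" "D t0 \<ge> 0" by (auto simp: S_def)
  have lt: "t0 < t" using t00 neg by (cases "t0 = t") auto
  have after: "\<And>s. t0 < s \<Longrightarrow> s \<le> t \<Longrightarrow> D s < 0"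
  proof (rule ccontr)
    fix s assume "t0 < s" "s \<le> t" "\<not> D s < 0"
    then have "s \<in> S" using t00 by (auto simp: S_def)
    then have "s \<le> t0" unfolding t0_def using bd by (rule cSup_upper)
    then show False using \<open>t0 < s\<close> by simp
  qed
  have "isCont D t0 \<or> True" by simp
  have ct0: "continuous (at t0 within {0..}) D" using cont t00 by (simp add: continuous_on_eq_continuous_within)
  define e where "e = - D t"
  have e: "e > 0" using neg by (simp add: e_def)
  obtain d where d: "d > 0" "\<And>x. x \<in> {0..} \<Longrightarrow> dist x t0 < d \<Longrightarrow> dist (D x) (D t0) < e"
    using ct0 e unfolding continuous_within_eps_delta by blast
  define u where "u = min (t0 + d/2) t"
  have u: "t0 < u" "u \<le> t" "dist u t0 < d" using d lt by (auto simp: u_def dist_real_def)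
  have "dist (D u) (D t0) < e" using d(2)[of u] u t00 by auto
  then have Du: "D u > D t" using t00 by (auto simp: e_def dist_real_def)
  have "\<forall>s\<in>{u..t}. D s \<le> 0" using after u by (meson atLeastAtMost_iff less_eq_real_def less_le_trans)
  then have "D u \<le> D t" using mono[of u t] u t00 by simp
  then show False using Du by simp
qed



lemma finite_hatZ_bounded: "finite (hatZ \<inter> {x. \<bar>x\<bar> \<le> R})"
proof -
  have "hatZ \<inter> {x. \<bar>x\<bar> \<le> R} \<subseteq> (\<lambda>k::int. real_of_int k + 1/2) ` {\<lfloor>-R\<rfloor> - 1..\<lceil>R\<rceil>}"
  proof
    fix x assume x: "x \<in> hatZ \<inter> {x. \<bar>x\<bar> \<le> R}"
    then obtain k where k: "x - 1/2 = real_of_int k" by (auto simp: hatZ_def elim!: Ints_cases)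
    have "x = real_of_int k + 1/2" using k by simp
    moreover have "k \<in> {\<lfloor>-R\<rfloor> - 1..\<lceil>R\<rceil>}" using x k
      by (auto simp: floor_le_iff le_ceiling_iff) linarith+
    ultimately show "x \<in> (\<lambda>k::int. real_of_int k + 1/2) ` {\<lfloor>-R\<rfloor> - 1..\<lceil>R\<rceil>}" by blast
  qed
  then show ?thesis by (rule finite_subset) simp
qed

lemma finite_oiv_hatZ: "finite (oiv a b \<inter> hatZ)"
  by (rule finite_subset[OF _ finite_hatZ_bounded[of "\<bar>a\<bar> + \<bar>b\<bar>"]]) (auto simp: oiv_def)

lemma card_oiv0: "card (oiv 0 (real_of_int m) \<inter> hatZ) \<ge> nat \<bar>m\<bar>"
proof -
  define h where "h = (\<lambda>k::nat. sgn (real_of_int m) * (real k + 1/2))"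
  have "inj_on h {..<nat \<bar>m\<bar>}"
    by (auto simp: inj_on_def h_def sgn_if split: if_splits)
  moreover have "h ` {..<nat \<bar>m\<bar>} \<subseteq> oiv 0 (real_of_int m) \<inter> hatZ"
  proof
    fix x assume "x \<in> h ` {..<nat \<bar>m\<bar>}"
    then obtain k where k: "k < nat \<bar>m\<bar>" "x = h k" by auto
    have m: "m \<noteq> 0" using k by auto
    show "x \<in> oiv 0 (real_of_int m) \<inter> hatZ"
    proof (cases "m > 0")
      case True
      have "real k + 1 \<le> real_of_int m" using k True by linarith
      then show ?thesis using True k
        by (auto simp: h_def oiv_def hatZ_def min_def max_def)
    next
      case False
      then have "m < 0" using m by simp
      have "real k + 1 \<le> - real_of_int m" using k \<open>m < 0\<close> by linarith
      moreover have "- (real k + 1/2) - 1/2 = real_of_int (- int k - 1)" by simp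
      ultimately show ?thesis using \<open>m < 0\<close> k
        by (auto simp: h_def oiv_def hatZ_def min_def max_def simp del: of_int_diff of_int_minus)
    qed
  qed
  ultimately show ?thesis using card_inj_on_le finite_oiv_hatZ by (metis card_lessThan)
qed

lemma Av_nonneg: "(\<forall>b\<in>hatZ. 0 < c b) \<Longrightarrow> Av I c \<ge> 0"
  unfolding Av_def by (intro divide_nonneg_nonneg sum_nonneg) auto

lemma YlowT_at:
  assumes "y \<in> YlowT \<gamma>" "s \<ge> 0"
  shows "(\<forall>b\<in>hatZ. 0 < y b s) \<and>
    (\<forall>\<epsilon>>0. \<exists>N::int. \<forall>m::int. \<bar>m\<bar> \<ge> N \<longrightarrow> Av (oiv 0 (real_of_int m)) (\<lambda>a. y a s) \<ge> \<gamma> - \<epsilon>)"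
proof -
  have pos: "\<And>s'. s' \<ge> 0 \<Longrightarrow> \<forall>b\<in>hatZ. 0 < y b s'" using assms(1) by (auto simp: YlowT_def)
  show ?thesis
  proof (intro conjI allI impI)
    show "\<forall>b\<in>hatZ. 0 < y b s" using pos assms(2) by simp
  next
    fix \<epsilon> :: real assume e: "\<epsilon> > 0"
    then obtain N :: int where N: "\<forall>m::int. \<bar>m\<bar> \<ge> N \<longrightarrow>
         (INF s'\<in>{0..s}. Av (oiv 0 (real_of_int m)) (\<lambda>a. y a s')) \<ge> \<gamma> - \<epsilon>"
      using assms unfolding YlowT_def by blast
    show "\<exists>N::int. \<forall>m::int. \<bar>m\<bar> \<ge> N \<longrightarrow> Av (oiv 0 (real_of_int m)) (\<lambda>a. y a s) \<ge> \<gamma> - \<epsilon>"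
    proof (intro exI allI impI)
      fix m :: int assume "\<bar>m\<bar> \<ge> N"
      then have "\<gamma> - \<epsilon> \<le> (INF s'\<in>{0..s}. Av (oiv 0 (real_of_int m)) (\<lambda>a. y a s'))" using N by blast
      also have "\<dots> \<le> Av (oiv 0 (real_of_int m)) (\<lambda>a. y a s)"
      proof (rule cINF_lower)
        show "bdd_below ((\<lambda>s'. Av (oiv 0 (real_of_int m)) (\<lambda>a. y a s')) ` {0..s})"
          by (rule bdd_belowI[of _ 0]) (auto intro!: Av_nonneg pos)
      qed (use assms(2) in auto)
      finally show "Av (oiv 0 (real_of_int m)) (\<lambda>a. y a s) \<ge> \<gamma> - \<epsilon>" .
    qed
  qed
qed

lemma psi_nonneg:
  assumes "\<forall>b\<in>hatZ. 0 < c b" "y \<ge> 0"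
  shows "psi a y c \<ge> 0"
proof -
  have "\<And>I. zsum I c \<ge> 0" using assms unfolding zsum_def by (intro sum_nonneg) auto
  then show ?thesis using assms unfolding psi_def
    by (auto intro!: infsum_nonneg mult_nonneg_nonneg divide_nonneg_nonneg)
qed



lemma term_mono:
  fixes y y' Z Z' :: real
  assumes "0 < y" "y \<le> y'" "0 < Z'" "Z' \<le> Z"
  shows "y / (Z * (y + Z)) \<le> y' / (Z' * (y' + Z'))"
proof -
  have p: "0 < Z * (y + Z)" "0 < Z' * (y' + Z')" using assms by auto
  have a: "y * y' * Z' \<le> y * y' * Z" using assms by (intro mult_left_mono) auto
  have b: "y * (Z' * Z') \<le> y' * (Z * Z)" using assms by (intro mult_mono) (auto intro: mult_mono)
  have "y * (Z' * (y' + Z')) \<le> y' * (Z * (y + Z))" using a b by (simp add: algebra_simps)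
  then show ?thesis using p by (simp add: divide_simps mult.commute)
qed

lemma zsum_facts:
  assumes "\<forall>b\<in>hatZ. 0 < z' b \<and> z' b \<le> z b"
  shows "zsum (oiv a b) z' \<le> zsum (oiv a b) z" "zsum (oiv a b) z' \<ge> 0"
    "zsum (oiv a b) z' = 0 \<Longrightarrow> zsum (oiv a b) z = 0"
proof -
  show "zsum (oiv a b) z' \<le> zsum (oiv a b) z" unfolding zsum_def using assms by (intro sum_mono) auto
  show "zsum (oiv a b) z' \<ge> 0" unfolding zsum_def using assms by (intro sum_nonneg) auto
  assume "zsum (oiv a b) z' = 0"
  then have "oiv a b \<inter> hatZ = {}" unfolding zsum_def using assms finite_oiv_hatZ[of a b]
    by (metis (no_types, lifting) IntD2 less_irrefl sum_pos)
  then show "zsum (oiv a b) z = 0" by (simp add: zsum_def)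
qed

lemma psi_mono:
  assumes y: "0 < y" "y \<le> y'" and z: "\<forall>b\<in>hatZ. 0 < z' b \<and> z' b \<le> z b"
    and sm: "(\<lambda>i::int. y' / (zsum (oiv a (real_of_int i)) z' * (y' + zsum (oiv a (real_of_int i)) z')))
       summable_on {i::int. \<bar>real_of_int i - a\<bar> > 1}"
  shows "psi a y z \<le> psi a y' z'"
proof -
  let ?f = "\<lambda>i::int. y / (zsum (oiv a (real_of_int i)) z * (y + zsum (oiv a (real_of_int i)) z))"
  let ?g = "\<lambda>i::int. y' / (zsum (oiv a (real_of_int i)) z' * (y' + zsum (oiv a (real_of_int i)) z'))"
  have le: "?f i \<le> ?g i" for i
  proof (cases "zsum (oiv a (real_of_int i)) z' = 0")
    case True
    then show ?thesis using zsum_facts[OF z] by simp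
  next
    case False
    then have "zsum (oiv a (real_of_int i)) z' > 0" using zsum_facts(2)[OF z, of a "real_of_int i"] by simp
    then show ?thesis using zsum_facts(1)[OF z] y by (intro term_mono) auto
  qed
  have nn: "0 \<le> ?f i" for i
  proof -
    have "zsum (oiv a (real_of_int i)) z \<ge> 0"
      using zsum_facts(1,2)[OF z, of a "real_of_int i"] by linarith
    then show ?thesis using y by auto
  qed
  have "?f summable_on {i::int. \<bar>real_of_int i - a\<bar> > 1}"
    by (rule summable_on_comparison_test[OF sm]) (use le nn in auto)
  then have "infsum ?f {i::int. \<bar>real_of_int i - a\<bar> > 1} \<le> infsum ?g {i::int. \<bar>real_of_int i - a\<bar> > 1}"
    by (intro infsum_mono sm le)
  then show ?thesis using y unfolding psi_def by auto
qed

lemma psi_summable: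
  assumes a: "a \<in> hatZ" and y: "y > 0" and g: "\<gamma> > 0" and cpos: "\<forall>b\<in>hatZ. 0 < c b"
    and lim: "\<forall>\<epsilon>>0. \<exists>N::int. \<forall>m::int. \<bar>m\<bar> \<ge> N \<longrightarrow> Av (oiv 0 (real_of_int m)) c \<ge> \<gamma> - \<epsilon>"
  shows "(\<lambda>i::int. y / (zsum (oiv a (real_of_int i)) c * (y + zsum (oiv a (real_of_int i)) c)))
       summable_on {i::int. \<bar>real_of_int i - a\<bar> > 1}"
proof -
  let ?f = "\<lambda>i::int. y / (zsum (oiv a (real_of_int i)) c * (y + zsum (oiv a (real_of_int i)) c))"
  obtain N :: int where N: "\<And>m::int. \<bar>m\<bar> \<ge> N \<Longrightarrow> Av (oiv 0 (real_of_int m)) c \<ge> \<gamma>/2"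
    using lim g by (metis field_sum_of_halves half_gt_zero add_diff_cancel_right')
  define K where "K = hatZ \<inter> {x. \<bar>x\<bar> \<le> \<bar>a\<bar>}"
  have fK: "finite K" unfolding K_def by (rule finite_hatZ_bounded)
  define C where "C = sum c K"
  have C0: "C \<ge> 0" unfolding C_def K_def using cpos by (intro sum_nonneg) auto
  define N2 where "N2 = max N (max (\<lceil>\<bar>a\<bar>\<rceil> + 2) (\<lceil>4 * C / \<gamma>\<rceil> + 1))"
  have key: "zsum (oiv a (real_of_int m)) c \<ge> \<gamma>/4 * \<bar>real_of_int m\<bar>" if m: "\<bar>m\<bar> \<ge> N2" for m :: int
  proof -
    have mN: "\<bar>m\<bar> \<ge> N" and ma: "\<bar>real_of_int m\<bar> \<ge> \<bar>a\<bar> + 2" and mC: "\<bar>real_of_int m\<bar> \<ge> 4 * C / \<gamma>"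
      using m unfolding N2_def by linarith+
    have m1: "\<bar>m\<bar> \<ge> 1" using ma by linarith
    let ?A0 = "oiv 0 (real_of_int m) \<inter> hatZ"
    let ?Aa = "oiv a (real_of_int m) \<inter> hatZ"
    have cardge: "real (card ?A0) \<ge> \<bar>real_of_int m\<bar>"
      using card_oiv0[of m] by (metis of_int_abs of_int_of_nat_eq of_nat_mono nat_0_le abs_ge_zero)
    then have cpos': "real (card ?A0) > 0" using m1 by linarith
    have "\<gamma>/2 \<le> Av (oiv 0 (real_of_int m)) c" using N mN by blast
    then have "\<gamma>/2 * real (card ?A0) \<le> sum c ?A0" using cpos' unfolding Av_def by (simp add: field_simps)
    moreover have "\<gamma>/2 * \<bar>real_of_int m\<bar> \<le> \<gamma>/2 * real (card ?A0)" using cardge g by simp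
    ultimately have S0: "\<gamma>/2 * \<bar>real_of_int m\<bar> \<le> sum c ?A0" by linarith
    have sub: "?A0 \<subseteq> ?Aa \<union> K"
    proof
      fix b assume b: "b \<in> ?A0"
      show "b \<in> ?Aa \<union> K"
      proof (cases "\<bar>b\<bar> \<le> \<bar>a\<bar>")
        case True then show ?thesis using b by (auto simp: K_def)
      next
        case False
        then show ?thesis using b ma by (auto simp: oiv_def min_def max_def split: if_splits)
      qed
    qed
    have "sum c ?A0 \<le> sum c (?Aa \<union> K)"
      using sub cpos fK finite_oiv_hatZ by (intro sum_mono2) (auto simp: K_def)
    also have "\<dots> = sum c ?Aa + sum c K - sum c (?Aa \<inter> K)"
      using fK finite_oiv_hatZ by (simp add: sum_Un)
    also have "\<dots> \<le> sum c ?Aa + C"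
    proof -
      have "sum c (?Aa \<inter> K) \<ge> 0" using cpos by (intro sum_nonneg) auto
      then show ?thesis by (simp add: C_def)
    qed
    finally have "\<gamma>/2 * \<bar>real_of_int m\<bar> \<le> zsum (oiv a (real_of_int m)) c + C"
      using S0 unfolding zsum_def by linarith
    moreover have "C \<le> \<gamma>/4 * \<bar>real_of_int m\<bar>" using mC g by (simp add: field_simps)
    ultimately show ?thesis by linarith
  qed
  define A where "A = {i::int. \<bar>real_of_int i - a\<bar> > 1}"
  have fin: "?f summable_on (A \<inter> {i. \<bar>i\<bar> < N2})"
    by (rule summable_on_finite, rule finite_subset[of _ "{-N2..N2}"]) auto
  have gs: "(\<lambda>i::int. (16 * y / \<gamma>^2) * (1 / (real_of_int i)^2)) summable_on UNIV"
    by (rule summable_on_cmult_right[OF summable_inv_sq_int])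
  have inf: "?f summable_on (A \<inter> {i. \<bar>i\<bar> \<ge> N2})"
  proof (rule summable_on_comparison_test[OF summable_on_subset[OF gs]])
    fix i assume i: "i \<in> A \<inter> {i. N2 \<le> \<bar>i\<bar>}"
    define Zs where "Zs = zsum (oiv a (real_of_int i)) c"
    define q where "q = \<gamma>/4 * \<bar>real_of_int i\<bar>"
    have "\<lceil>\<bar>a\<bar>\<rceil> \<ge> 0" by simp
    moreover have "\<lceil>\<bar>a\<bar>\<rceil> + 2 \<le> \<bar>i\<bar>" using i unfolding N2_def by simp
    ultimately have "\<bar>i\<bar> \<ge> 1" by linarith
    then have i1: "\<bar>real_of_int i\<bar> \<ge> 1" by (metis of_int_abs of_int_1_le_iff)
    have qZ: "q \<le> Zs" using key i unfolding Zs_def q_def by auto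
    have q0: "q > 0" using i1 g unfolding q_def by auto
    have "y / (Zs * (y + Zs)) \<le> y / (Zs * Zs)"
      using q0 qZ y by (intro divide_left_mono mult_left_mono mult_pos_pos) auto
    also have "\<dots> \<le> y / (q * q)"
      using q0 qZ y by (intro divide_left_mono mult_mono mult_pos_pos) auto
    also have "\<dots> = (16 * y / \<gamma>^2) * (1 / (real_of_int i)^2)"
      unfolding q_def using g by (simp add: field_simps power2_eq_square abs_mult_self_eq)
    finally show "?f i \<le> (16 * y / \<gamma>^2) * (1 / (real_of_int i)^2)" unfolding Zs_def .
    show "0 \<le> ?f i" using qZ q0 y unfolding Zs_def by auto
  qed auto
  have "A = (A \<inter> {i. \<bar>i\<bar> < N2}) \<union> (A \<inter> {i. \<bar>i\<bar> \<ge> N2})" by auto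
  then show ?thesis using summable_on_union[OF fin inf] unfolding A_def by simp
qed



lemma cmp_core:
  fixes U V f g w :: "real \<Rightarrow> real" and \<beta> uu vv t :: real
  assumes cU: "continuous_on {0..} U" and cV: "continuous_on {0..} V" and b: "\<beta> \<ge> 0"
    and fi: "\<And>t. t \<ge> 0 \<Longrightarrow> f integrable_on {0..t}"
    and gi: "\<And>t. t \<ge> 0 \<Longrightarrow> g integrable_on {0..t}"
    and Ue: "\<And>t. t \<ge> 0 \<Longrightarrow> U t = uu + w t + \<beta> * integral {0..t} f"
    and Ve: "\<And>t. t \<ge> 0 \<Longrightarrow> V t = vv + w t + \<beta> * integral {0..t} g"
    and c: "vv \<le> uu"
    and step: "\<And>s. s \<ge> 0 \<Longrightarrow> U s \<le> V s \<Longrightarrow> g s \<le> f s"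
    and t: "t \<ge> 0"
  shows "V t \<le> U t"
proof -
  define D where "D = (\<lambda>t. U t - V t)"
  have z: "integral {0..0} h = 0" if "h integrable_on {0..0}" for h :: "real \<Rightarrow> real"
    using Henstock_Kurzweil_Integration.integral_combine[where f=h and a=0 and c=0 and b=0] that by simp
  have "D t \<ge> 0"
  proof (rule cmp_principle[of D t])
    show "continuous_on {0..} D" unfolding D_def using cU cV by (intro continuous_intros)
    show "0 \<le> D 0" unfolding D_def using Ue[of 0] Ve[of 0] z fi[of 0] gi[of 0] c by simp
    show "D u \<le> D t" if u: "0 \<le> u" "u \<le> t" "\<forall>s\<in>{u..t}. D s \<le> 0" for u t
    proof -
      have fut: "f integrable_on {u..t}" "g integrable_on {u..t}"
        using integrable_subinterval_real[OF fi[of t], of u t] integrable_subinterval_real[OF gi[of t], of u t] u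
        by auto
      have cf: "integral {0..t} f = integral {0..u} f + integral {u..t} f"
        using Henstock_Kurzweil_Integration.integral_combine[where f=f and a=0 and c=u and b=t] fi[of t] u by linarith
      have cg: "integral {0..t} g = integral {0..u} g + integral {u..t} g"
        using Henstock_Kurzweil_Integration.integral_combine[where f=g and a=0 and c=u and b=t] gi[of t] u by linarith
      have "0 \<le> integral {u..t} (\<lambda>s. f s - g s)"
      proof (rule integral_nonneg)
        show "(\<lambda>s. f s - g s) integrable_on {u..t}" using fut by (rule integrable_diff)
        fix s assume "s \<in> {u..t}"
        then have "U s \<le> V s" "s \<ge> 0" using u unfolding D_def by auto
        then show "0 \<le> f s - g s" using step[of s] by simp
      qed
      then have "0 \<le> integral {u..t} f - integral {u..t} g" using integral_diff[OF fut] by simp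
      then have "0 \<le> \<beta> * (integral {u..t} f - integral {u..t} g)" using b by simp
      moreover have "D t = uu - vv + \<beta>*(integral {0..u} f - integral {0..u} g) + \<beta>*(integral {u..t} f - integral {u..t} g)"
        unfolding D_def using Ue[of t] Ve[of t] u cf cg by (simp add: right_diff_distrib distrib_left)
      moreover have "D u = uu - vv + \<beta>*(integral {0..u} f - integral {0..u} g)"
        unfolding D_def using Ue[of u] Ve[of u] u by (simp add: right_diff_distrib)
      ultimately show ?thesis by linarith
    qed
  qed (rule t)
  then show ?thesis unfolding D_def by simp
qed



lemma inv_anti: "0 < (x::real) \<Longrightarrow> x \<le> y \<Longrightarrow> 1 / y \<le> 1 / x"
  by (rule divide_left_mono) auto

lemma det:
  fixes \<beta> \<gamma> :: real and Y Z :: "nat \<Rightarrow> real \<Rightarrow> real \<Rightarrow> real" and W :: "real \<Rightarrow> real \<Rightarrow> real"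
    and yin zin :: "real \<Rightarrow> real"
  assumes b: "\<beta> \<ge> 1" and g: "\<gamma> > 0"
    and YT: "\<forall>i\<le>n. Y i \<in> YlowT \<gamma>" and Yit: "It_scheme \<beta> n yin W Y"
    and ZT: "\<forall>i\<le>n. Z i \<in> YlowT \<gamma>" and Zit: "It_scheme \<beta> n zin W Z"
  shows "(\<forall>i<n. \<forall>a\<in>hatZ. \<forall>t\<ge>0. Y i a t \<ge> Y (Suc i) a t) \<and>
    ((\<forall>a\<in>hatZ. yin a \<ge> zin a) \<longrightarrow> (\<forall>i\<le>n. \<forall>a\<in>hatZ. \<forall>t\<ge>0. Y i a t \<ge> Z i a t))"
proof -
  have b0: "\<beta> \<ge> 0" using b by simp
  have contY: "continuous_on {0..} (Y i a)" if "i \<le> n" "a \<in> hatZ" for i a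
    using YT that by (auto simp: YlowT_def)
  have contZ: "continuous_on {0..} (Z i a)" if "i \<le> n" "a \<in> hatZ" for i a
    using ZT that by (auto simp: YlowT_def)
  have atY: "(\<forall>b\<in>hatZ. 0 < Y i b s) \<and>
    (\<forall>\<epsilon>>0. \<exists>N::int. \<forall>m::int. \<bar>m\<bar> \<ge> N \<longrightarrow> Av (oiv 0 (real_of_int m)) (\<lambda>a. Y i a s) \<ge> \<gamma> - \<epsilon>)"
    if "i \<le> n" "s \<ge> 0" for i s
    using YlowT_at[of "Y i" \<gamma> s] YT that by auto
  have atZ: "(\<forall>b\<in>hatZ. 0 < Z i b s) \<and>
    (\<forall>\<epsilon>>0. \<exists>N::int. \<forall>m::int. \<bar>m\<bar> \<ge> N \<longrightarrow> Av (oiv 0 (real_of_int m)) (\<lambda>a. Z i a s) \<ge> \<gamma> - \<epsilon>)"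
    if "i \<le> n" "s \<ge> 0" for i s
    using YlowT_at[of "Z i" \<gamma> s] ZT that by auto
  have Y0: "(\<lambda>s. 1 / Y 0 a s) integrable_on {0..t} \<and>
        Y 0 a t = yin a + W a t + \<beta> * integral {0..t} (\<lambda>s. 1 / Y 0 a s)"
    if "a \<in> hatZ" "t \<ge> 0" for a t using Yit that unfolding It_scheme_def by blast
  have Z0: "(\<lambda>s. 1 / Z 0 a s) integrable_on {0..t} \<and>
        Z 0 a t = zin a + W a t + \<beta> * integral {0..t} (\<lambda>s. 1 / Z 0 a s)"
    if "a \<in> hatZ" "t \<ge> 0" for a t using Zit that unfolding It_scheme_def by blast
  have YS: "(\<lambda>s. 1 / Y (Suc j) a s - psi a (Y (Suc j) a s) (\<lambda>b. Y j b s)) integrable_on {0..t} \<and>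
        Y (Suc j) a t = yin a + W a t +
          \<beta> * integral {0..t} (\<lambda>s. 1 / Y (Suc j) a s - psi a (Y (Suc j) a s) (\<lambda>b. Y j b s))"
    if "Suc j \<le> n" "a \<in> hatZ" "t \<ge> 0" for j a t
  proof -
    have "1 \<le> Suc j \<and> Suc j \<le> n" using that by simp
    then have "\<forall>a\<in>hatZ. \<forall>t\<ge>0.
        (\<lambda>s. 1 / Y (Suc j) a s - psi a (Y (Suc j) a s) (\<lambda>b. Y (Suc j - 1) b s)) integrable_on {0..t} \<and>
        Y (Suc j) a t = yin a + W a t +
          \<beta> * integral {0..t} (\<lambda>s. 1 / Y (Suc j) a s - psi a (Y (Suc j) a s) (\<lambda>b. Y (Suc j - 1) b s))"
      using Yit unfolding It_scheme_def by blast
    then show ?thesis using that by simp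
  qed
  have ZS: "(\<lambda>s. 1 / Z (Suc j) a s - psi a (Z (Suc j) a s) (\<lambda>b. Z j b s)) integrable_on {0..t} \<and>
        Z (Suc j) a t = zin a + W a t +
          \<beta> * integral {0..t} (\<lambda>s. 1 / Z (Suc j) a s - psi a (Z (Suc j) a s) (\<lambda>b. Z j b s))"
    if "Suc j \<le> n" "a \<in> hatZ" "t \<ge> 0" for j a t
  proof -
    have "1 \<le> Suc j \<and> Suc j \<le> n" using that by simp
    then have "\<forall>a\<in>hatZ. \<forall>t\<ge>0.
        (\<lambda>s. 1 / Z (Suc j) a s - psi a (Z (Suc j) a s) (\<lambda>b. Z (Suc j - 1) b s)) integrable_on {0..t} \<and>
        Z (Suc j) a t = zin a + W a t +
          \<beta> * integral {0..t} (\<lambda>s. 1 / Z (Suc j) a s - psi a (Z (Suc j) a s) (\<lambda>b. Z (Suc j - 1) b s))"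
      using Zit unfolding It_scheme_def by blast
    then show ?thesis using that by simp
  qed
  have partA: "i < n \<longrightarrow> (\<forall>a\<in>hatZ. \<forall>t\<ge>0. Y (Suc i) a t \<le> Y i a t)" for i
  proof (induction i)
    case 0
    show ?case
    proof (intro impI ballI allI)
      fix a t assume n: "0 < n" and a: "a \<in> hatZ" and t: "(t::real) \<ge> 0"
      show "Y (Suc 0) a t \<le> Y 0 a t"
      proof (rule cmp_core[where U = "Y 0 a" and V = "Y (Suc 0) a" and w = "W a" and \<beta> = \<beta>
            and uu = "yin a" and vv = "yin a" and f = "\<lambda>s. 1 / Y 0 a s"
            and g = "\<lambda>s. 1 / Y (Suc 0) a s - psi a (Y (Suc 0) a s) (\<lambda>b. Y 0 b s)"])
        show "continuous_on {0..} (Y 0 a)" using contY n a by simp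
        show "continuous_on {0..} (Y (Suc 0) a)" using contY n a by simp
        fix s :: real assume s: "s \<ge> 0"
        show "(\<lambda>s. 1 / Y 0 a s) integrable_on {0..s}" "Y 0 a s = yin a + W a s + \<beta> * integral {0..s} (\<lambda>s. 1 / Y 0 a s)"
          using Y0[OF a s] by auto
        show "(\<lambda>s. 1 / Y (Suc 0) a s - psi a (Y (Suc 0) a s) (\<lambda>b. Y 0 b s)) integrable_on {0..s}"
          "Y (Suc 0) a s = yin a + W a s + \<beta> * integral {0..s} (\<lambda>s. 1 / Y (Suc 0) a s - psi a (Y (Suc 0) a s) (\<lambda>b. Y 0 b s))"
          using YS[of 0 a s] n a s by auto
        assume le: "Y 0 a s \<le> Y (Suc 0) a s"
        have p0: "\<forall>b\<in>hatZ. 0 < Y 0 b s" using atY[of 0 s] s by simp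
        have p1: "0 < Y 0 a s" using p0 a by simp
        have "psi a (Y (Suc 0) a s) (\<lambda>b. Y 0 b s) \<ge> 0" using p0 p1 le by (intro psi_nonneg) auto
        moreover have "1 / Y (Suc 0) a s \<le> 1 / Y 0 a s" using p1 le by (rule inv_anti)
        ultimately show "1 / Y (Suc 0) a s - psi a (Y (Suc 0) a s) (\<lambda>b. Y 0 b s) \<le> 1 / Y 0 a s" by simp
      qed (use b0 t in auto)
    qed
  next
    case (Suc j)
    show ?case
    proof (intro impI ballI allI)
      fix a t assume n: "Suc j < n" and a: "a \<in> hatZ" and t: "(t::real) \<ge> 0"
      have IH: "\<forall>b\<in>hatZ. \<forall>t\<ge>0. Y (Suc j) b t \<le> Y j b t" using Suc n by simp
      show "Y (Suc (Suc j)) a t \<le> Y (Suc j) a t"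
      proof (rule cmp_core[where U = "Y (Suc j) a" and V = "Y (Suc (Suc j)) a" and w = "W a" and \<beta> = \<beta>
            and uu = "yin a" and vv = "yin a"
            and f = "\<lambda>s. 1 / Y (Suc j) a s - psi a (Y (Suc j) a s) (\<lambda>b. Y j b s)"
            and g = "\<lambda>s. 1 / Y (Suc (Suc j)) a s - psi a (Y (Suc (Suc j)) a s) (\<lambda>b. Y (Suc j) b s)"])
        show "continuous_on {0..} (Y (Suc j) a)" using contY n a by simp
        show "continuous_on {0..} (Y (Suc (Suc j)) a)" using contY n a by simp
        fix s :: real assume s: "s \<ge> 0"
        show "(\<lambda>s. 1 / Y (Suc j) a s - psi a (Y (Suc j) a s) (\<lambda>b. Y j b s)) integrable_on {0..s}"
          "Y (Suc j) a s = yin a + W a s + \<beta> * integral {0..s} (\<lambda>s. 1 / Y (Suc j) a s - psi a (Y (Suc j) a s) (\<lambda>b. Y j b s))"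
          using YS[of j a s] n a s by auto
        show "(\<lambda>s. 1 / Y (Suc (Suc j)) a s - psi a (Y (Suc (Suc j)) a s) (\<lambda>b. Y (Suc j) b s)) integrable_on {0..s}"
          "Y (Suc (Suc j)) a s = yin a + W a s + \<beta> * integral {0..s} (\<lambda>s. 1 / Y (Suc (Suc j)) a s - psi a (Y (Suc (Suc j)) a s) (\<lambda>b. Y (Suc j) b s))"
          using YS[of "Suc j" a s] n a s by auto
        assume le: "Y (Suc j) a s \<le> Y (Suc (Suc j)) a s"
        have A1: "(\<forall>b\<in>hatZ. 0 < Y (Suc j) b s) \<and>
          (\<forall>\<epsilon>>0. \<exists>N::int. \<forall>m::int. \<bar>m\<bar> \<ge> N \<longrightarrow> Av (oiv 0 (real_of_int m)) (\<lambda>a. Y (Suc j) a s) \<ge> \<gamma> - \<epsilon>)"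
          using atY[of "Suc j" s] s n by simp
        have p1: "0 < Y (Suc j) a s" using A1 a by simp
        have p2: "0 < Y (Suc (Suc j)) a s" using p1 le by simp
        have "psi a (Y (Suc j) a s) (\<lambda>b. Y j b s) \<le> psi a (Y (Suc (Suc j)) a s) (\<lambda>b. Y (Suc j) b s)"
        proof (rule psi_mono)
          show "\<forall>b\<in>hatZ. 0 < Y (Suc j) b s \<and> Y (Suc j) b s \<le> Y j b s" using A1 IH s by simp
          show "(\<lambda>i::int. Y (Suc (Suc j)) a s / (zsum (oiv a (real_of_int i)) (\<lambda>b. Y (Suc j) b s) *
              (Y (Suc (Suc j)) a s + zsum (oiv a (real_of_int i)) (\<lambda>b. Y (Suc j) b s))))
            summable_on {i::int. \<bar>real_of_int i - a\<bar> > 1}"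
            using a p2 g A1 by (intro psi_summable[where \<gamma> = \<gamma>]) auto
        qed (use p1 le in auto)
        moreover have "1 / Y (Suc (Suc j)) a s \<le> 1 / Y (Suc j) a s" using p1 le by (rule inv_anti)
        ultimately show "1 / Y (Suc (Suc j)) a s - psi a (Y (Suc (Suc j)) a s) (\<lambda>b. Y (Suc j) b s)
            \<le> 1 / Y (Suc j) a s - psi a (Y (Suc j) a s) (\<lambda>b. Y j b s)" by simp
      qed (use b0 t in auto)
    qed
  qed
  have partB: "i \<le> n \<longrightarrow> (\<forall>a\<in>hatZ. \<forall>t\<ge>0. Z i a t \<le> Y i a t)" if yz: "\<forall>a\<in>hatZ. yin a \<ge> zin a" for i
  proof (induction i)
    case 0
    show ?case
    proof (intro impI ballI allI)
      fix a t assume n: "0 \<le> n" and a: "a \<in> hatZ" and t: "(t::real) \<ge> 0"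
      show "Z 0 a t \<le> Y 0 a t"
      proof (rule cmp_core[where U = "Y 0 a" and V = "Z 0 a" and w = "W a" and \<beta> = \<beta>
            and uu = "yin a" and vv = "zin a" and f = "\<lambda>s. 1 / Y 0 a s"
            and g = "\<lambda>s. 1 / Z 0 a s"])
        show "continuous_on {0..} (Y 0 a)" using contY n a by simp
        show "continuous_on {0..} (Z 0 a)" using contZ n a by simp
        fix s :: real assume s: "s \<ge> 0"
        show "(\<lambda>s. 1 / Y 0 a s) integrable_on {0..s}" "Y 0 a s = yin a + W a s + \<beta> * integral {0..s} (\<lambda>s. 1 / Y 0 a s)"
          using Y0[OF a s] by auto
        show "(\<lambda>s. 1 / Z 0 a s) integrable_on {0..s}" "Z 0 a s = zin a + W a s + \<beta> * integral {0..s} (\<lambda>s. 1 / Z 0 a s)"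
          using Z0[OF a s] by auto
        assume le: "Y 0 a s \<le> Z 0 a s"
        have p1: "0 < Y 0 a s" using atY[of 0 s] s a by simp
        show "1 / Z 0 a s \<le> 1 / Y 0 a s" using p1 le by (rule inv_anti)
      qed (use b0 t yz a in auto)
    qed
  next
    case (Suc j)
    show ?case
    proof (intro impI ballI allI)
      fix a t assume n: "Suc j \<le> n" and a: "a \<in> hatZ" and t: "(t::real) \<ge> 0"
      have IH: "\<forall>b\<in>hatZ. \<forall>t\<ge>0. Z j b t \<le> Y j b t" using Suc n by simp
      show "Z (Suc j) a t \<le> Y (Suc j) a t"
      proof (rule cmp_core[where U = "Y (Suc j) a" and V = "Z (Suc j) a" and w = "W a" and \<beta> = \<beta>
            and uu = "yin a" and vv = "zin a"
            and f = "\<lambda>s. 1 / Y (Suc j) a s - psi a (Y (Suc j) a s) (\<lambda>b. Y j b s)"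
            and g = "\<lambda>s. 1 / Z (Suc j) a s - psi a (Z (Suc j) a s) (\<lambda>b. Z j b s)"])
        show "continuous_on {0..} (Y (Suc j) a)" using contY n a by simp
        show "continuous_on {0..} (Z (Suc j) a)" using contZ n a by simp
        fix s :: real assume s: "s \<ge> 0"
        show "(\<lambda>s. 1 / Y (Suc j) a s - psi a (Y (Suc j) a s) (\<lambda>b. Y j b s)) integrable_on {0..s}"
          "Y (Suc j) a s = yin a + W a s + \<beta> * integral {0..s} (\<lambda>s. 1 / Y (Suc j) a s - psi a (Y (Suc j) a s) (\<lambda>b. Y j b s))"
          using YS[of j a s] n a s by auto
        show "(\<lambda>s. 1 / Z (Suc j) a s - psi a (Z (Suc j) a s) (\<lambda>b. Z j b s)) integrable_on {0..s}"
          "Z (Suc j) a s = zin a + W a s + \<beta> * integral {0..s} (\<lambda>s. 1 / Z (Suc j) a s - psi a (Z (Suc j) a s) (\<lambda>b. Z j b s))"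
          using ZS[of j a s] n a s by auto
        assume le: "Y (Suc j) a s \<le> Z (Suc j) a s"
        have A1: "(\<forall>b\<in>hatZ. 0 < Z j b s) \<and>
          (\<forall>\<epsilon>>0. \<exists>N::int. \<forall>m::int. \<bar>m\<bar> \<ge> N \<longrightarrow> Av (oiv 0 (real_of_int m)) (\<lambda>a. Z j a s) \<ge> \<gamma> - \<epsilon>)"
          using atZ[of j s] s n by simp
        have p1: "0 < Y (Suc j) a s" using atY[of "Suc j" s] s n a by simp
        have p2: "0 < Z (Suc j) a s" using p1 le by simp
        have "psi a (Y (Suc j) a s) (\<lambda>b. Y j b s) \<le> psi a (Z (Suc j) a s) (\<lambda>b. Z j b s)"
        proof (rule psi_mono)
          show "\<forall>b\<in>hatZ. 0 < Z j b s \<and> Z j b s \<le> Y j b s" using A1 IH s by simp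
          show "(\<lambda>i::int. Z (Suc j) a s / (zsum (oiv a (real_of_int i)) (\<lambda>b. Z j b s) *
              (Z (Suc j) a s + zsum (oiv a (real_of_int i)) (\<lambda>b. Z j b s))))
            summable_on {i::int. \<bar>real_of_int i - a\<bar> > 1}"
            using a p2 g A1 by (intro psi_summable[where \<gamma> = \<gamma>]) auto
        qed (use p1 le in auto)
        moreover have "1 / Z (Suc j) a s \<le> 1 / Y (Suc j) a s" using p1 le by (rule inv_anti)
        ultimately show "1 / Z (Suc j) a s - psi a (Z (Suc j) a s) (\<lambda>b. Z j b s)
            \<le> 1 / Y (Suc j) a s - psi a (Y (Suc j) a s) (\<lambda>b. Y j b s)" by simp
      qed (use b0 t yz a in auto)
    qed
  qed
  show ?thesis using partA partB by auto
qed


theorem proposition3p1: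
  fixes M :: "'w measure" and B :: "real \<Rightarrow> 'w \<Rightarrow> real \<Rightarrow> real"
    and \<beta> \<gamma> :: real and n :: nat and yin zin :: "real \<Rightarrow> real"
    and Y Z :: "nat \<Rightarrow> 'w \<Rightarrow> real \<Rightarrow> real \<Rightarrow> real"
  assumes "prob_space M"
    and "indep_BMs M B"
    and "\<beta> \<ge> 1" and "\<gamma> > 0"
    and "yin \<in> Ylow \<gamma>" and "zin \<in> Ylow \<gamma>"
    and "AE \<omega> in M. (\<forall>i\<le>n. Y i \<omega> \<in> YlowT \<gamma>) \<and> It_scheme \<beta> n yin (\<lambda>a. Wdrv B a \<omega>) (\<lambda>i. Y i \<omega>)"
    and "AE \<omega> in M. (\<forall>i\<le>n. Z i \<omega> \<in> YlowT \<gamma>) \<and> It_scheme \<beta> n zin (\<lambda>a. Wdrv B a \<omega>) (\<lambda>i. Z i \<omega>)"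
  shows "AE \<omega> in M.
           (\<forall>i<n. \<forall>a\<in>hatZ. \<forall>t\<ge>0. Y i \<omega> a t \<ge> Y (Suc i) \<omega> a t) \<and>
           ((\<forall>a\<in>hatZ. yin a \<ge> zin a) \<longrightarrow>
              (\<forall>i\<le>n. \<forall>a\<in>hatZ. \<forall>t\<ge>0. Y i \<omega> a t \<ge> Z i \<omega> a t))"
  using assms(7,8)
proof eventually_elim
  case (elim \<omega>)
  then show ?case
    using det[where \<beta> = \<beta> and \<gamma> = \<gamma> and n = n and Y = "\<lambda>i. Y i \<omega>" and Z = "\<lambda>i. Z i \<omega>"
        and W = "\<lambda>a. Wdrv B a \<omega>" and yin = yin and zin = zin] assms(3,4)
    by blast
qed

end
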